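(* Let $F_0\in\mathcal F$. For all $x<1/2$ and all integers $t\ge 0$, $$F_{2,t}(x) = \frac{\left[2F_0(x)\right]^{2^t}}{2}.$$
   Context: Voters form a continuum uniformly distributed on $[0,1]$. Candidates occupy points of $[0,1]$ and each voter votes for the nearest candidate. For candidates at distinct positions, the vote share of a candidate is the measure of the set of voters closer to it than to any other candidate: half the distance between its left and right neighbours, where a leftmost candidate at $y$ additionally receives all of $[0,y]$ and a rightmost candidate at $y$ additionally receives all of $[y,1]$. The plurality winner is the candidate with largest vote share, ties broken uniformly at random. Write $\mathrm{plurality}(x_1,\dots,x_k)$ for the (random) position of the plurality winner. Replicator dynamics: given a probability distribution $F_0$ on $[0,1]$ (identified with its CDF) and an integer $k\ge 2$, set $F_{k,0}=F_0$, and for $t\ge 1$ let $F_{k,t}(x)=\Pr(\mathrm{plurality}(X_{1,t},\dots,X_{k,t})\le x)$, where $X_{1,t},\dots,X_{k,t}$ are i.i.d. with distribution $F_{k,t-1}$. $\mathcal F$ denotes the set of probability distributions on $[0,1]$ that are symmetric about $1/2$ and atomless (continuous CDF). *)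

theory Defs
  imports "HOL-Probability.Probability"
begin

text \<open>Vote share of the cell belonging to position y, given the finite set S of
occupied positions (y in S): half the distance to the left and right neighbours,
with the leftmost getting all of [0,y] and the rightmost all of [y,1].\<close>
definition cell_share :: "real set \<Rightarrow> real \<Rightarrow> real" where
  "cell_share S y =
     (if \<exists>z\<in>S. z < y then (y - Max {z\<in>S. z < y}) / 2 else y) +
     (if \<exists>z\<in>S. y < z then (Min {z\<in>S. y < z} - y) / 2 else 1 - y)"

text \<open>For distinct positions this is exactly the paper's vote share; co-located
candidates (a null event here) split their common cell equally.\<close>
definition vote_share :: "nat \<Rightarrow> (nat \<Rightarrow> real) \<Rightarrow> nat \<Rightarrow> real" where
  "vote_share k x i = cell_share (x ` {..<k}) (x i) / real (card {j. j < k \<and> x j = x i})"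

definition winners :: "nat \<Rightarrow> (nat \<Rightarrow> real) \<Rightarrow> nat set" where
  "winners k x = {i. i < k \<and> (\<forall>j<k. vote_share k x j \<le> vote_share k x i)}"

text \<open>Pr(plurality(x 0,...,x (k-1)) \<le> a), ties broken uniformly at random among winners.\<close>
definition plurality_le :: "nat \<Rightarrow> (nat \<Rightarrow> real) \<Rightarrow> real \<Rightarrow> real" where
  "plurality_le k x a = real (card {i \<in> winners k x. x i \<le> a}) / real (card (winners k x))"

text \<open>Replicator dynamics on CDFs: F_{k,0} = F0, F_{k,t+1}(a) = Pr(plurality(X_1..X_k) \<le> a)
with X_i i.i.d. with CDF F_{k,t} (distribution = Lebesgue-Stieltjes measure of the CDF).\<close>
primrec replicator :: "nat \<Rightarrow> (real \<Rightarrow> real) \<Rightarrow> nat \<Rightarrow> real \<Rightarrow> real" where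
  "replicator k F0 0 = F0"
| "replicator k F0 (Suc t) = (\<lambda>a. \<integral>x. plurality_le k x a
      \<partial>(PiM {..<k} (\<lambda>_. interval_measure (replicator k F0 t))))"

text \<open>F0 is in the class \<F>: the CDF of an atomless probability distribution on [0,1]
symmetric about 1/2.\<close>
definition in_calF :: "(real \<Rightarrow> real) \<Rightarrow> bool" where
  "in_calF F \<longleftrightarrow> mono F \<and> continuous_on UNIV F \<and>
     (\<forall>x<0. F x = 0) \<and> (\<forall>x\<ge>1. F x = 1) \<and> (\<forall>x. F (1 - x) = 1 - F x)"

end

theory Submission
  imports Defs
begin


lemma two_set: "{..<2::nat} = {0,1}" by auto

lemma vs0: "vote_share 2 x 0 = (if x 0 < x 1 then (x 0 + x 1)/2 else if x 1 < x 0 then 1 - (x 0 + x 1)/2 else 1/2)"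
proof -
  have img: "x ` {..<2} = {x 0, x 1}" by (auto simp: two_set)
  consider "x 0 < x 1" | "x 1 < x 0" | "x 0 = x 1" by linarith
  then show ?thesis
  proof cases
    case 1
    have c: "{j. j < 2 \<and> x j = x 0} = {0}" using 1 by (auto simp: less_2_cases_iff)
    have s: "{z \<in> {x 0, x 1}. x 0 < z} = {x 1}" using 1 by auto
    show ?thesis using 1 unfolding vote_share_def cell_share_def img c s by (auto simp: field_simps)
  next
    case 2
    have c: "{j. j < 2 \<and> x j = x 0} = {0}" using 2 by (auto simp: less_2_cases_iff)
    have s: "{z \<in> {x 0, x 1}. z < x 0} = {x 1}" using 2 by auto
    show ?thesis using 2 unfolding vote_share_def cell_share_def img c s by (auto simp: field_simps)
  next
    case 3
    have c: "{j. j < 2 \<and> x j = x 0} = {0,1}" using 3 by (auto simp: less_2_cases_iff)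
    show ?thesis using 3 unfolding vote_share_def cell_share_def img c by auto
  qed
qed

lemma vs1: "vote_share 2 x 1 = (if x 1 < x 0 then (x 0 + x 1)/2 else if x 0 < x 1 then 1 - (x 0 + x 1)/2 else 1/2)"
proof -
  have img: "x ` {..<2} = {x 0, x 1}" by (auto simp: two_set)
  consider "x 0 < x 1" | "x 1 < x 0" | "x 0 = x 1" by linarith
  then show ?thesis
  proof cases
    case 1
    have c: "{j. j < 2 \<and> x j = x 1} = {1}" using 1 by (auto simp: less_2_cases_iff)
    have s: "{z \<in> {x 0, x 1}. z < x 1} = {x 0}" using 1 by auto
    show ?thesis using 1 unfolding vote_share_def cell_share_def img c s by (auto simp: field_simps)
  next
    case 2
    have c: "{j. j < 2 \<and> x j = x 1} = {1}" using 2 by (auto simp: less_2_cases_iff)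
    have s: "{z \<in> {x 0, x 1}. x 1 < z} = {x 0}" using 2 by auto
    show ?thesis using 2 unfolding vote_share_def cell_share_def img c s by (auto simp: field_simps)
  next
    case 3
    have c: "{j. j < 2 \<and> x j = x 1} = {0,1}" using 3 by (auto simp: less_2_cases_iff)
    show ?thesis using 3 unfolding vote_share_def cell_share_def img c by auto
  qed
qed

definition ind :: "bool \<Rightarrow> real" where "ind b = (if b then 1 else 0)"

definition g :: "real \<Rightarrow> real \<Rightarrow> real \<Rightarrow> real" where
  "g a u v = (if \<bar>u - 1/2\<bar> < \<bar>v - 1/2\<bar> then ind (u \<le> a)
     else if \<bar>v - 1/2\<bar> < \<bar>u - 1/2\<bar> then ind (v \<le> a)
     else (ind (u \<le> a) + ind (v \<le> a)) / 2)"

lemma g_sym: "g a u v = g a v u"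
  unfolding g_def by auto

lemma card_single: "card {i \<in> {c::nat}. P i} = (if P c then 1 else 0)"
proof -
  have "{i \<in> {c::nat}. P i} = (if P c then {c} else {})" by auto
  then show ?thesis by simp
qed

lemma plurality_g: "plurality_le 2 x a = g a (x 0) (x 1)"
proof -
  define v0 where "v0 = vote_share 2 x 0"
  define v1 where "v1 = vote_share 2 x 1"
  have W: "winners 2 x = (if v0 = v1 then {0,1} else if v1 < v0 then {0} else {1})"
    unfolding winners_def v0_def[symmetric] v1_def[symmetric]
    by (auto simp: less_2_cases_iff v0_def v1_def)
  have key1: "v1 < v0 \<longleftrightarrow> \<bar>x 0 - 1/2\<bar> < \<bar>x 1 - 1/2\<bar>"
    unfolding v0_def v1_def vs0 vs1 by (auto split: if_splits abs_split simp: field_simps)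
  have key2: "v0 < v1 \<longleftrightarrow> \<bar>x 1 - 1/2\<bar> < \<bar>x 0 - 1/2\<bar>"
    unfolding v0_def v1_def vs0 vs1 by (auto split: if_splits abs_split simp: field_simps)
  show ?thesis
  proof (cases "v0 = v1")
    case True
    then have "\<not> \<bar>x 0 - 1/2\<bar> < \<bar>x 1 - 1/2\<bar>" "\<not> \<bar>x 1 - 1/2\<bar> < \<bar>x 0 - 1/2\<bar>"
      using key1 key2 by auto
    moreover have "card {i \<in> {0::nat,1}. x i \<le> a} = ind (x 0 \<le> a) + ind (x 1 \<le> a)"
    proof -
      have e: "{i \<in> {0::nat,1}. x i \<le> a} = {i. i = 0 \<and> x 0 \<le> a} \<union> {i. i = 1 \<and> x 1 \<le> a}"
        by blast
      show ?thesis unfolding e ind_def by (cases "x 0 \<le> a"; cases "x 1 \<le> a") auto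
    qed
    ultimately show ?thesis using True unfolding plurality_le_def W g_def
      by auto
  next
    case False
    show ?thesis
    proof (cases "v1 < v0")
      case True
      then have Wx: "winners 2 x = {0}" using W False by simp
      show ?thesis using False True key1 unfolding plurality_le_def Wx card_single g_def ind_def
        by simp
    next
      case F2: False
      then have "v0 < v1" using False by auto
      then have Wx: "winners 2 x = {1}" using W False F2 by simp
      show ?thesis using False F2 key1 key2 \<open>v0 < v1\<close> unfolding plurality_le_def Wx card_single g_def ind_def
        by auto
    qed
  qed
qed



locale calF =
  fixes F :: "real \<Rightarrow> real"
  assumes F: "in_calF F"
begin

abbreviation "M \<equiv> interval_measure F"
abbreviation "P \<equiv> M \<Otimes>\<^sub>M M"

lemma F_mono: "x \<le> y \<Longrightarrow> F x \<le> F y"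
  using F unfolding in_calF_def mono_def by auto

lemma F_cont: "isCont F x"
  using F unfolding in_calF_def by (simp add: continuous_on_eq_continuous_at)

lemma F_sym: "F (1 - x) = 1 - F x"
  using F unfolding in_calF_def by auto

lemma F_half: "F (1/2) = 1/2"
  using F_sym[of "1/2"] by simp

lemma F_bot: "(F \<longlongrightarrow> 0) at_bot"
proof (rule tendsto_eventually)
  show "\<forall>\<^sub>F x in at_bot. F x = 0"
    using F unfolding in_calF_def eventually_at_bot_linorder
    by (intro exI[of _ "-1"]) auto
qed

lemma F_top: "(F \<longlongrightarrow> 1) at_top"
proof (rule tendsto_eventually)
  show "\<forall>\<^sub>F x in at_top. F x = 1"
    using F unfolding in_calF_def eventually_at_top_linorder
    by (intro exI[of _ "1"]) auto
qed

lemma F_rc: "continuous (at_right a) F"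
  using F_cont continuous_at_imp_continuous_at_within by blast

lemma F_range: "0 \<le> F x" "F x \<le> 1"
proof -
  have "F (min x (-1)) = 0" "F (max x 1) = 1" using F unfolding in_calF_def by auto
  then show "0 \<le> F x" "F x \<le> 1" using F_mono[of "min x (-1)" x] F_mono[of x "max x 1"] by auto
qed

lemma M_rd: "real_distribution M"
  by (rule real_distribution_interval_measure) (use F_mono F_rc F_bot F_top in auto)

sublocale M: real_distribution M by (rule M_rd)

lemma cdf_M: "cdf M = F"
  by (rule cdf_interval_measure) (use F_mono F_rc F_bot in auto)

lemma M_Iic: "measure M {..a} = F a"
  using cdf_M unfolding cdf_def by metis

lemma M_single: "measure M {a} = 0"
  using M.isCont_cdf[of a] cdf_M F_cont by simp

lemma M_sym: "distr M borel (\<lambda>x. 1 - x) = M"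
proof (rule cdf_unique)
  show "real_distribution (distr M borel (\<lambda>x. 1 - x))" by simp
  show "real_distribution M" by (rule M_rd)
  show "cdf (distr M borel (\<lambda>x. 1 - x)) = cdf M"
  proof
    fix a
    have "cdf (distr M borel (\<lambda>x. 1 - x)) a = measure M ((\<lambda>x. 1 - x) -` {..a})"
      unfolding cdf_def by (subst measure_distr) auto
    also have "(\<lambda>x::real. 1 - x) -` {..a} = UNIV - {..<1-a}" by auto
    also have "measure M (UNIV - {..<1-a}) = 1 - measure M {..<1-a}"
      using M.prob_compl[of "{..<1-a}"] by simp
    also have "measure M {..<1-a} = measure M {..1-a} - measure M {1-a}"
      proof -
      have "{..<1-a} = {..1-a} - {1-a}" by auto
      then show ?thesis using M.finite_measure_Diff[of "{..1-a}" "{1-a}"] by simp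
    qed
    also have "\<dots> = 1 - F a" using M_Iic M_single F_sym by simp
    finally show "cdf (distr M borel (\<lambda>x. 1 - x)) a = cdf M a" using cdf_M by simp
  qed
qed

sublocale P: pair_prob_space M M by unfold_locales

lemma space_P: "space P = UNIV" by (simp add: space_pair_measure)

lemma sets_P: "sets P = sets (borel \<Otimes>\<^sub>M borel)"
  by (intro sets_pair_measure_cong) auto

lemma Pset: "{p. Q p} \<in> sets (borel \<Otimes>\<^sub>M borel) \<Longrightarrow> {p. Q p} \<in> sets P"
  using sets_P by simp

lemma M_id: "distr M borel (\<lambda>x. x) = M"
  by (rule measure_eqI) (auto simp: emeasure_distr)

lemma P_map:
  assumes f: "f \<in> borel_measurable borel" and h: "h \<in> borel_measurable borel"
    and df: "distr M borel f = M" and dh: "distr M borel h = M"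
    and Q: "{p. Q p} \<in> sets (borel \<Otimes>\<^sub>M borel)"
  shows "measure P {p. Q (f (fst p), h (snd p))} = measure P {p. Q p}"
proof -
  have fM: "f \<in> measurable M borel" using f by (subst measurable_cong_sets[OF sets_interval_measure refl])
  have hM: "h \<in> measurable M borel" using h by (subst measurable_cong_sets[OF sets_interval_measure refl])
  have sf: "sigma_finite_measure (distr M borel h)" unfolding dh by (rule M.sigma_finite_measure)
  have funeq: "(\<lambda>(x, y). (f x, h y)) = (\<lambda>p. (f (fst p), h (snd p)))" by (auto simp: fun_eq_iff)
  have m: "(\<lambda>p. (f (fst p), h (snd p))) \<in> measurable P (borel \<Otimes>\<^sub>M borel)"
    by (rule measurable_Pair[OF measurable_compose[OF measurable_fst fM] measurable_compose[OF measurable_snd hM]])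
  have eq: "distr P (borel \<Otimes>\<^sub>M borel) (\<lambda>p. (f (fst p), h (snd p))) = P"
    using pair_measure_distr[OF fM hM sf, unfolded df dh funeq, symmetric] .
  have "measure P {p. Q p} = measure (distr P (borel \<Otimes>\<^sub>M borel) (\<lambda>p. (f (fst p), h (snd p)))) {p. Q p}"
    by (simp only: eq)
  also have "\<dots> = measure P ((\<lambda>p. (f (fst p), h (snd p))) -` {p. Q p} \<inter> space P)"
    by (rule measure_distr[OF m Q])
  also have "(\<lambda>p. (f (fst p), h (snd p))) -` {p. Q p} \<inter> space P = {p. Q (f (fst p), h (snd p))}"
    by (auto simp: space_P)
  finally show ?thesis by simp
qed

lemma P_swap:
  assumes Q: "{p. Q p} \<in> sets (borel \<Otimes>\<^sub>M borel)"
  shows "measure P {p. Q (snd p, fst p)} = measure P {p. Q p}"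
proof -
  have eq: "distr P P (\<lambda>(x, y). (y, x)) = P"
    by (rule P.distr_pair_swap[symmetric])
  have "measure P {p. Q p} = measure (distr P P (\<lambda>(x, y). (y, x))) {p. Q p}"
    by (simp only: eq)
  also have "\<dots> = measure P ((\<lambda>(x, y). (y, x)) -` {p. Q p} \<inter> space P)"
    by (rule measure_distr) (use Pset[OF Q] in auto)
  also have "(\<lambda>(x, y). (y, x)) -` {p. Q p} \<inter> space P = {p. Q (snd p, fst p)}"
    by (auto simp: space_P)
  finally show ?thesis by simp
qed

lemma r_meas: "(\<lambda>x::real. 1 - x) \<in> borel_measurable borel" by measurable
lemma id_meas: "(\<lambda>x::real. x) \<in> borel_measurable borel" by measurable

lemma P_refl2:
  assumes Q: "{p. Q p} \<in> sets (borel \<Otimes>\<^sub>M borel)"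
  shows "measure P {p. Q (1 - fst p, 1 - snd p)} = measure P {p. Q p}"
  using P_map[OF r_meas r_meas M_sym M_sym Q] by simp

lemma P_refl_snd:
  assumes Q: "{p. Q p} \<in> sets (borel \<Otimes>\<^sub>M borel)"
  shows "measure P {p. Q (fst p, 1 - snd p)} = measure P {p. Q p}"
  using P_map[OF id_meas r_meas M_id M_sym Q] by simp

lemma P_times: "A \<in> sets borel \<Longrightarrow> B \<in> sets borel \<Longrightarrow> measure P (A \<times> B) = measure M A * measure M B"
  by (simp add: measure_def M.emeasure_pair_measure_Times enn2real_mult)

end


lemma BB: "Measurable.pred (borel \<Otimes>\<^sub>M borel) Q \<Longrightarrow> {p::real\<times>real. Q p} \<in> sets (borel \<Otimes>\<^sub>M borel)"
  by (simp add: pred_def space_pair_measure)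

context calF begin

lemma null_sec:
  assumes A: "A \<in> sets (borel \<Otimes>\<^sub>M borel)" and sec: "\<And>x. Pair x -` A \<subseteq> {c x}"
  shows "measure P A = 0"
proof -
  have AP: "A \<in> sets P" using A sets_P by simp
  have "emeasure P A = (\<integral>\<^sup>+x. emeasure M (Pair x -` A) \<partial>M)"
    by (rule M.emeasure_pair_measure_alt[OF AP])
  also have "\<dots> = (\<integral>\<^sup>+x. 0 \<partial>M)"
  proof (rule nn_integral_cong)
    fix x
    have "emeasure M (Pair x -` A) \<le> emeasure M {c x}"
      by (rule emeasure_mono[OF sec]) simp
    also have "\<dots> = 0" using M_single by (simp add: M.emeasure_eq_measure)
    finally show "emeasure M (Pair x -` A) = 0" by simp
  qed
  finally show ?thesis by (simp add: measure_def)
qed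

lemma null_diag: "measure P {p::real\<times>real. fst p = snd p} = 0"
proof (rule null_sec[where c="\<lambda>x. x"])
  show "{p::real\<times>real. fst p = snd p} \<in> sets (borel \<Otimes>\<^sub>M borel)" by (rule BB) measurable
qed auto

lemma null_anti: "measure P {p::real\<times>real. fst p + snd p = 1} = 0"
proof (rule null_sec[where c="\<lambda>x. 1 - x"])
  show "{p::real\<times>real. fst p + snd p = 1} \<in> sets (borel \<Otimes>\<^sub>M borel)" by (rule BB) measurable
qed auto

lemma null_fst: "measure P {p::real\<times>real. fst p = c} = 0"
proof -
  have e: "{p::real\<times>real. fst p = c} = {c} \<times> UNIV" by auto
  have "measure P ({c} \<times> UNIV) = 0" using P_times[of "{c}" UNIV] M_single by simp
  then show ?thesis by (simp only: e)
qed

lemma null_snd: "measure P {p::real\<times>real. snd p = c} = 0"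
proof -
  have e: "{p::real\<times>real. snd p = c} = UNIV \<times> {c}" by auto
  have "measure P (UNIV \<times> {c}) = 0" using P_times[of UNIV "{c}"] M_single by simp
  then show ?thesis by (simp only: e)
qed

lemma null_sub: "A \<in> sets P \<Longrightarrow> B \<in> sets P \<Longrightarrow> A \<subseteq> B \<Longrightarrow> measure P B = 0 \<Longrightarrow> measure P A = 0"
  using P.finite_measure_mono[of A B] measure_nonneg[of P A] by simp

lemma tie_null: "measure P {p::real\<times>real. \<bar>fst p - 1/2\<bar> = \<bar>snd p - 1/2\<bar>} = 0"
proof -
  have s1: "{p::real\<times>real. fst p = snd p} \<in> sets P" by (rule Pset, rule BB) measurable
  have s2: "{p::real\<times>real. fst p + snd p = 1} \<in> sets P" by (rule Pset, rule BB) measurable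
  have "{p::real\<times>real. \<bar>fst p - 1/2\<bar> = \<bar>snd p - 1/2\<bar>} = {p::real\<times>real. fst p = snd p} \<union> {p::real\<times>real. fst p + snd p = (1::real)}"
    by (auto simp: abs_if split: if_splits)
  moreover have "measure P ({p::real\<times>real. fst p = snd p} \<union> {p::real\<times>real. fst p + snd p = (1::real)}) = 0"
    using measure_Un_le[OF s1 s2] null_diag null_anti
      measure_nonneg[of P "{p::real\<times>real. fst p = snd p} \<union> {p::real\<times>real. fst p + snd p = (1::real)}"] by simp
  ultimately show ?thesis by simp
qed

lemma half_lt: "measure P {p::real\<times>real. \<bar>fst p - 1/2\<bar> < \<bar>snd p - 1/2\<bar>} = 1/2"
proof -
  let ?A = "{p::real\<times>real. \<bar>fst p - 1/2\<bar> < \<bar>snd p - 1/2\<bar>}"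
  let ?B = "{p::real\<times>real. \<bar>snd p - 1/2\<bar> < \<bar>fst p - 1/2\<bar>}"
  let ?C = "{p::real\<times>real. \<bar>fst p - 1/2\<bar> = \<bar>snd p - 1/2\<bar>}"
  have sA: "?A \<in> sets (borel \<Otimes>\<^sub>M borel)" by (rule BB) measurable
  have sB: "?B \<in> sets (borel \<Otimes>\<^sub>M borel)" by (rule BB) measurable
  have sC: "?C \<in> sets (borel \<Otimes>\<^sub>M borel)" by (rule BB) measurable
  have U: "space P = (?A \<union> ?B) \<union> ?C" by (auto simp: space_P)
  have "1 = measure P (space P)" by (simp add: P.prob_space)
  also have "\<dots> = measure P ?A + measure P ?B + measure P ?C"
    unfolding U using Pset[OF sA] Pset[OF sB] Pset[OF sC]
    by (subst P.finite_measure_Union, auto, subst P.finite_measure_Union, auto)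
  also have "measure P ?B = measure P ?A"
    using P_swap[OF sA] by simp
  finally show ?thesis using tie_null by simp
qed

end


lemma abs_refl: "\<bar>1 - y - 1/2\<bar> = \<bar>(y::real) - 1/2\<bar>" by (simp add: abs_if)

lemma g_meas_bb: "(\<lambda>p::real\<times>real. g a (fst p) (snd p)) \<in> borel_measurable (borel \<Otimes>\<^sub>M borel)"
  unfolding g_def ind_def by measurable

definition phi :: "real \<Rightarrow> real" where
  "phi p = 2 * p^2 - 4 * (max (p - 1/2) 0)^2"

context calF begin

lemma add2: "A \<in> sets P \<Longrightarrow> B \<in> sets P \<Longrightarrow> A \<inter> B = {} \<Longrightarrow> measure P (A \<union> B) = measure P A + measure P B"
  by (rule P.finite_measure_Union)

lemma Pset2: "A \<in> sets (borel \<Otimes>\<^sub>M borel) \<Longrightarrow> A \<in> sets P"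
  using sets_P by simp

definition J :: "real \<Rightarrow> real" where
  "J a = measure P {p::real\<times>real. fst p \<le> a \<and> \<bar>fst p - 1/2\<bar> < \<bar>snd p - 1/2\<bar>}"

lemma J_low:
  assumes a: "a < 1/2"
  shows "J a = F a ^ 2"
proof -
  define SL where "SL = {p::real\<times>real. fst p \<le> a \<and> \<bar>fst p - 1/2\<bar> < \<bar>snd p - 1/2\<bar> \<and> snd p < 1/2}"
  define SR where "SR = {p::real\<times>real. fst p \<le> a \<and> \<bar>fst p - 1/2\<bar> < \<bar>snd p - 1/2\<bar> \<and> snd p > 1/2}"
  define SM where "SM = {p::real\<times>real. fst p \<le> a \<and> \<bar>fst p - 1/2\<bar> < \<bar>snd p - 1/2\<bar> \<and> snd p = 1/2}"
  have sL: "SL \<in> sets (borel \<Otimes>\<^sub>M borel)" unfolding SL_def by (rule BB) measurable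
  have sR: "SR \<in> sets (borel \<Otimes>\<^sub>M borel)" unfolding SR_def by (rule BB) measurable
  have sM: "SM \<in> sets (borel \<Otimes>\<^sub>M borel)" unfolding SM_def by (rule BB) measurable
  have sN: "{p::real\<times>real. snd p = 1/2} \<in> sets (borel \<Otimes>\<^sub>M borel)" by (rule BB) measurable
  have SU: "{p::real\<times>real. fst p \<le> a \<and> \<bar>fst p - 1/2\<bar> < \<bar>snd p - 1/2\<bar>} = (SL \<union> SR) \<union> SM"
    unfolding SL_def SR_def SM_def by auto
  have mSM: "measure P SM = 0"
    by (rule null_sub[OF Pset2[OF sM] Pset2[OF sN] _ null_snd]) (auto simp: SM_def)
  have mSR: "measure P SR = measure P SL"
  proof -
    have "measure P {p. (\<lambda>q. q \<in> SL) (fst p, 1 - snd p)} = measure P {p. (\<lambda>q. q \<in> SL) p}"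
      by (rule P_refl_snd) (use sL in simp)
    moreover have "{p. (\<lambda>q. q \<in> SL) (fst p, 1 - snd p)} = SR"
      unfolding SL_def SR_def by (auto simp: abs_refl)
    ultimately show ?thesis by simp
  qed
  define T where "T = {p::real\<times>real. snd p < fst p \<and> fst p \<le> a}"
  define T' where "T' = {p::real\<times>real. fst p < snd p \<and> snd p \<le> a}"
  define Dg where "Dg = {p::real\<times>real. fst p = snd p \<and> fst p \<le> a}"
  have sT: "T \<in> sets (borel \<Otimes>\<^sub>M borel)" unfolding T_def by (rule BB) measurable
  have sT': "T' \<in> sets (borel \<Otimes>\<^sub>M borel)" unfolding T'_def by (rule BB) measurable
  have sD: "Dg \<in> sets (borel \<Otimes>\<^sub>M borel)" unfolding Dg_def by (rule BB) measurable
  have sDiag: "{p::real\<times>real. fst p = snd p} \<in> sets (borel \<Otimes>\<^sub>M borel)" by (rule BB) measurable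
  have SLT: "SL = T" unfolding SL_def T_def using a by (auto simp: abs_if)
  have mT': "measure P T' = measure P T"
  proof -
    have "measure P {p. (\<lambda>q. q \<in> T) (snd p, fst p)} = measure P {p. (\<lambda>q. q \<in> T) p}"
      by (rule P_swap) (use sT in simp)
    moreover have "{p. (\<lambda>q. q \<in> T) (snd p, fst p)} = T'"
      unfolding T_def T'_def by auto
    ultimately show ?thesis by simp
  qed
  have mD: "measure P Dg = 0"
    by (rule null_sub[OF Pset2[OF sD] Pset2[OF sDiag] _ null_diag]) (auto simp: Dg_def)
  have sq: "{..a} \<times> {..a} = (T \<union> T') \<union> Dg"
    unfolding T_def T'_def Dg_def by auto
  have "F a * F a = measure P ({..a} \<times> {..a})"
    using P_times[of "{..a}" "{..a}"] M_Iic by simp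
  also have "\<dots> = measure P T + measure P T' + measure P Dg"
    unfolding sq using Pset2[OF sT] Pset2[OF sT'] Pset2[OF sD]
    by (subst add2, auto simp: T_def T'_def Dg_def, subst add2, auto)
  finally have mT: "measure P T = F a * F a / 2" using mT' mD by simp
  have "J a = measure P SL + measure P SR + measure P SM"
    unfolding J_def SU using Pset2[OF sL] Pset2[OF sR] Pset2[OF sM]
    by (subst add2, auto simp: SL_def SR_def SM_def, subst add2, auto)
  then show ?thesis using mSM mSR SLT mT by (simp add: power2_eq_square)
qed

lemma J_compl: "J a + J (1 - a) = 1/2"
proof -
  define A1 where "A1 = {p::real\<times>real. fst p \<le> a \<and> \<bar>fst p - 1/2\<bar> < \<bar>snd p - 1/2\<bar>}"
  define A2 where "A2 = {p::real\<times>real. a < fst p \<and> \<bar>fst p - 1/2\<bar> < \<bar>snd p - 1/2\<bar>}"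
  define B1 where "B1 = {p::real\<times>real. fst p < 1 - a \<and> \<bar>fst p - 1/2\<bar> < \<bar>snd p - 1/2\<bar>}"
  define B2 where "B2 = {p::real\<times>real. fst p = 1 - a \<and> \<bar>fst p - 1/2\<bar> < \<bar>snd p - 1/2\<bar>}"
  have s1: "A1 \<in> sets (borel \<Otimes>\<^sub>M borel)" unfolding A1_def by (rule BB) measurable
  have s2: "A2 \<in> sets (borel \<Otimes>\<^sub>M borel)" unfolding A2_def by (rule BB) measurable
  have s3: "B1 \<in> sets (borel \<Otimes>\<^sub>M borel)" unfolding B1_def by (rule BB) measurable
  have s4: "B2 \<in> sets (borel \<Otimes>\<^sub>M borel)" unfolding B2_def by (rule BB) measurable
  have sF: "{p::real\<times>real. fst p = 1 - a} \<in> sets (borel \<Otimes>\<^sub>M borel)" by (rule BB) measurable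
  have "1/2 = measure P (A1 \<union> A2)"
  proof -
    have "A1 \<union> A2 = {p::real\<times>real. \<bar>fst p - 1/2\<bar> < \<bar>snd p - 1/2\<bar>}"
      unfolding A1_def A2_def by auto
    then show ?thesis using half_lt by simp
  qed
  also have "\<dots> = measure P A1 + measure P A2"
    by (rule add2) (use Pset2[OF s1] Pset2[OF s2] in \<open>auto simp: A1_def A2_def\<close>)
  also have "measure P A2 = measure P B1"
  proof -
    have "measure P {p. (\<lambda>q. q \<in> A2) (1 - fst p, 1 - snd p)} = measure P {p. (\<lambda>q. q \<in> A2) p}"
      by (rule P_refl2) (use s2 in simp)
    moreover have "{p. (\<lambda>q. q \<in> A2) (1 - fst p, 1 - snd p)} = B1"
      unfolding A2_def B1_def by (auto simp: abs_refl)
    ultimately show ?thesis by simp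
  qed
  also have "measure P B1 = J (1 - a)"
  proof -
    have mB2: "measure P B2 = 0"
      by (rule null_sub[OF Pset2[OF s4] Pset2[OF sF] _ null_fst]) (auto simp: B2_def)
    have "{p::real\<times>real. fst p \<le> 1 - a \<and> \<bar>fst p - 1/2\<bar> < \<bar>snd p - 1/2\<bar>} = B1 \<union> B2"
      unfolding B1_def B2_def by auto
    then have "J (1 - a) = measure P (B1 \<union> B2)" unfolding J_def by simp
    also have "\<dots> = measure P B1 + measure P B2"
      by (rule add2) (use Pset2[OF s3] Pset2[OF s4] in \<open>auto simp: B1_def B2_def\<close>)
    finally show ?thesis using mB2 by simp
  qed
  finally show ?thesis unfolding J_def A1_def by simp
qed

lemma I_eq: "integral\<^sup>L P (\<lambda>p. g a (fst p) (snd p)) = 2 * J a"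
proof -
  define S1 where "S1 = {p::real\<times>real. fst p \<le> a \<and> \<bar>fst p - 1/2\<bar> < \<bar>snd p - 1/2\<bar>}"
  define S2 where "S2 = {p::real\<times>real. snd p \<le> a \<and> \<bar>snd p - 1/2\<bar> < \<bar>fst p - 1/2\<bar>}"
  define N where "N = {p::real\<times>real. \<bar>fst p - 1/2\<bar> = \<bar>snd p - 1/2\<bar>}"
  have s1: "S1 \<in> sets (borel \<Otimes>\<^sub>M borel)" unfolding S1_def by (rule BB) measurable
  have s2: "S2 \<in> sets (borel \<Otimes>\<^sub>M borel)" unfolding S2_def by (rule BB) measurable
  have sN: "N \<in> sets (borel \<Otimes>\<^sub>M borel)" unfolding N_def by (rule BB) measurable
  have nN: "N \<in> null_sets P"
  proof -
    have "N \<in> sets P" by (rule Pset2[OF sN])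
    moreover have "emeasure P N = 0" using tie_null unfolding N_def by (simp add: P.emeasure_eq_measure)
    ultimately show ?thesis by (simp add: null_sets_def)
  qed
  have AE: "AE p in P. g a (fst p) (snd p) = indicator S1 p + indicator S2 p"
    by (rule AE_I'[OF nN]) (auto simp: N_def S1_def S2_def g_def ind_def indicator_def)
  have gm: "(\<lambda>p. g a (fst p) (snd p)) \<in> borel_measurable P"
    using g_meas_bb by (subst measurable_cong_sets[OF sets_P refl])
  have i1: "integrable P (indicator S1 :: _ \<Rightarrow> real)" by (rule integrable_real_indicator[OF Pset2[OF s1]]) (simp add: P.emeasure_eq_measure)
  have i2: "integrable P (indicator S2 :: _ \<Rightarrow> real)" by (rule integrable_real_indicator[OF Pset2[OF s2]]) (simp add: P.emeasure_eq_measure)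
  have "integral\<^sup>L P (\<lambda>p. g a (fst p) (snd p)) = integral\<^sup>L P (\<lambda>p. indicator S1 p + indicator S2 p)"
    by (rule integral_cong_AE[OF gm _ AE]) (use i1 i2 in auto)
  also have "\<dots> = measure P S1 + measure P S2"
    using i1 i2 by (simp add: space_P)
  also have "measure P S2 = measure P S1"
  proof -
    have "measure P {p. (\<lambda>q. q \<in> S1) (snd p, fst p)} = measure P {p. (\<lambda>q. q \<in> S1) p}"
      by (rule P_swap) (use s1 in simp)
    moreover have "{p. (\<lambda>q. q \<in> S1) (snd p, fst p)} = S2"
      unfolding S1_def S2_def by auto
    ultimately show ?thesis by simp
  qed
  finally show ?thesis unfolding J_def S1_def by simp
qed

lemma F_le_half: "x < 1/2 \<Longrightarrow> F x \<le> 1/2"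
  using F_mono[of x "1/2"] F_half by simp
lemma F_ge_half: "x > 1/2 \<Longrightarrow> F x \<ge> 1/2"
  using F_mono[of "1/2" x] F_half by simp

lemma I_phi: "integral\<^sup>L P (\<lambda>p. g a (fst p) (snd p)) = phi (F a)"
proof -
  consider "a < 1/2" | "a = 1/2" | "a > 1/2" by linarith
  then show ?thesis
  proof cases
    case 1
    then show ?thesis using I_eq J_low[OF 1] F_le_half[OF 1] by (simp add: phi_def)
  next
    case 2
    have "J (1/2) = 1/4" using J_compl[of "1/2"] by simp
    then show ?thesis unfolding 2 using I_eq[of "1/2"] F_half by (simp add: phi_def F_half power2_eq_square)
  next
    case 3
    then have "1 - a < 1/2" by simp
    then have "J a = 1/2 - F (1 - a) ^ 2" using J_compl[of a] J_low by simp
    then show ?thesis using I_eq F_ge_half[OF 3] F_sym[of a]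
      by (simp add: phi_def power2_eq_square algebra_simps)
  qed
qed

end


lemma g_bound: "\<bar>g a u v\<bar> \<le> 1"
  unfolding g_def ind_def by auto

context calF begin

lemma step_eq: "(\<integral>x. plurality_le 2 x a \<partial>(PiM {..<2} (\<lambda>_. M))) = phi (F a)"
proof -
  interpret PP: product_prob_space "\<lambda>_::nat. M" "{..<2::nat}"
    by unfold_locales
  let ?Pi = "PiM {..<2::nat} (\<lambda>_. M)"
  have I2: "{..<2::nat} = insert 0 {1}" by auto
  have gP: "(\<lambda>p. g a (fst p) (snd p)) \<in> borel_measurable P"
    using g_meas_bb by (subst measurable_cong_sets[OF sets_P refl])
  have gP': "(\<lambda>(z, y). g a y z) \<in> borel_measurable P"
  proof -
    have "(\<lambda>(z, y). g a y z) = (\<lambda>p. g a (fst p) (snd p))" by (auto simp: fun_eq_iff g_sym)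
    then show ?thesis using gP by simp
  qed
  have intP: "integrable P (\<lambda>(z, y). g a y z)"
    by (rule P.integrable_const_bound[where B=1]) (use gP' g_bound in auto)
  have comp: "(\<lambda>x. (x 0, x 1)) \<in> measurable (PiM (insert 0 {1::nat}) (\<lambda>_. M)) (borel \<Otimes>\<^sub>M borel)"
  proof (rule measurable_Pair)
    show "(\<lambda>x. x 0) \<in> borel_measurable (PiM (insert 0 {1::nat}) (\<lambda>_. M))"
    proof -
      have "(\<lambda>x. x 0) \<in> measurable (PiM (insert 0 {1::nat}) (\<lambda>_. M)) M"
        by (rule measurable_component_singleton) simp
      then show ?thesis unfolding measurable_cong_sets[OF refl sets_interval_measure] .
    qed
    show "(\<lambda>x. x 1) \<in> borel_measurable (PiM (insert 0 {1::nat}) (\<lambda>_. M))"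
    proof -
      have "(\<lambda>x. x 1) \<in> measurable (PiM (insert 0 {1::nat}) (\<lambda>_. M)) M"
        by (rule measurable_component_singleton) simp
      then show ?thesis unfolding measurable_cong_sets[OF refl sets_interval_measure] .
    qed
  qed
  have fm: "(\<lambda>x. g a (x 0) (x 1)) \<in> borel_measurable (PiM (insert 0 {1::nat}) (\<lambda>_. M))"
    using measurable_compose[OF comp g_meas_bb] by simp
  interpret PI: prob_space "PiM (insert 0 {1::nat}) (\<lambda>_. M)"
    by (rule prob_space_PiM) (rule M.prob_space_axioms)
  have fint: "integrable (PiM (insert 0 {1::nat}) (\<lambda>_. M)) (\<lambda>x. g a (x 0) (x 1))"
    by (rule PI.integrable_const_bound[where B=1]) (use fm g_bound in auto)
  have hm: "(\<lambda>z. \<integral>y. g a y z \<partial>M) \<in> borel_measurable M"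
    by (rule M.borel_measurable_lebesgue_integral) (use gP' in simp)
  have "(\<integral>x. plurality_le 2 x a \<partial>?Pi) = (\<integral>x. g a (x 0) (x 1) \<partial>?Pi)"
    by (simp add: plurality_g)
  also have "\<dots> = (\<integral>x. g a (x 0) (x 1) \<partial>(PiM (insert 0 {1::nat}) (\<lambda>_. M)))"
    by (simp only: I2)
  also have "\<dots> = (\<integral>x. (\<integral>y. g a ((x(0:=y)) 0) ((x(0:=y)) 1) \<partial>M) \<partial>(PiM {1::nat} (\<lambda>_. M)))"
    by (rule PP.product_integral_insert[OF _ _ fint]) auto
  also have "\<dots> = (\<integral>x. (\<lambda>z. \<integral>y. g a y z \<partial>M) (x 1) \<partial>(PiM {1::nat} (\<lambda>_. M)))"
    by simp
  also have "\<dots> = (\<integral>z. (\<integral>y. g a y z \<partial>M) \<partial>M)"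
    by (rule PP.product_integral_singleton) (use hm in simp)
  also have "\<dots> = integral\<^sup>L P (\<lambda>(z, y). g a y z)"
    using P.integral_fst'[OF intP] by simp
  also have "(\<lambda>(z, y). g a y z) = (\<lambda>p. g a (fst p) (snd p))" by (auto simp: fun_eq_iff g_sym)
  finally show ?thesis using I_phi by simp
qed

end


definition phi0 :: "real \<Rightarrow> real" where
  "phi0 p = 2 * p^2 - 4 * (max (p - 1/2) 0)^2"

lemma phi_eq: "phi = phi0"
  by (simp add: fun_eq_iff phi_def phi0_def)

lemma phi0_low: "p \<le> 1/2 \<Longrightarrow> phi0 p = 2 * p^2"
  by (simp add: phi0_def)

lemma phi0_high: "p \<ge> 1/2 \<Longrightarrow> phi0 p = 1 - 2 * (1 - p)^2"
  by (cases "p = 1/2") (simp_all add: phi0_def max_def power2_eq_square algebra_simps)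

lemma phi0_mono: "0 \<le> p \<Longrightarrow> p \<le> q \<Longrightarrow> q \<le> 1 \<Longrightarrow> phi0 p \<le> phi0 q"
proof -
  assume a: "0 \<le> p" "p \<le> q" "q \<le> 1"
  consider "q \<le> 1/2" | "p \<ge> 1/2" | "p < 1/2" "q > 1/2" by linarith
  then show ?thesis
  proof cases
    case 1 then show ?thesis using a by (simp add: phi0_low power_mono)
  next
    case 2 then show ?thesis using a by (simp add: phi0_high power_mono)
  next
    case 3
    have "p * p \<le> (1/2) * (1/2)" using 3 a by (intro mult_mono) auto
    then have "phi0 p \<le> 1/2" using 3 a phi0_low[of p] by (simp add: power2_eq_square)
    moreover have "(1 - q) * (1 - q) \<le> (1/2) * (1/2)" using 3 a by (intro mult_mono) auto
    then have "1/2 \<le> phi0 q" using 3 a phi0_high[of q] by (simp add: power2_eq_square)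
    ultimately show ?thesis by simp
  qed
qed

lemma phi0_sym: "phi0 (1 - p) = 1 - phi0 p"
  by (cases "p \<le> 1/2") (simp_all add: phi0_low phi0_high)

lemma phi0_cont: "continuous_on UNIV phi0"
  unfolding phi0_def by (intro continuous_intros)

lemma phi_calF:
  assumes F: "in_calF F"
  shows "in_calF (\<lambda>a. phi0 (F a))"
proof -
  interpret calF F by (rule calF.intro) (rule F)
  have "mono (\<lambda>a. phi0 (F a))"
    by (rule monoI) (rule phi0_mono; use F_range F_mono in auto)
  moreover have "continuous_on UNIV (\<lambda>a. phi0 (F a))"
    using continuous_on_compose2[OF phi0_cont, of UNIV F] F unfolding in_calF_def by auto
  moreover have "\<forall>x<0. phi0 (F x) = 0" using F unfolding in_calF_def by (simp add: phi0_def)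
  moreover have "\<forall>x\<ge>1. phi0 (F x) = 1" using F unfolding in_calF_def by (simp add: phi0_def power2_eq_square)
  moreover have "\<forall>x. phi0 (F (1 - x)) = 1 - phi0 (F x)" using F_sym phi0_sym by simp
  ultimately show ?thesis unfolding in_calF_def by blast
qed

lemma rep_step:
  assumes "in_calF (replicator 2 F0 t)"
  shows "replicator 2 F0 (Suc t) = (\<lambda>a. phi0 (replicator 2 F0 t a))"
proof -
  interpret calF "replicator 2 F0 t" by (rule calF.intro) (rule assms)
  show ?thesis using step_eq by (simp add: fun_eq_iff phi_eq)
qed

lemma rep_calF: "in_calF F0 \<Longrightarrow> in_calF (replicator 2 F0 t)"
proof (induction t)
  case 0 then show ?case by simp
next
  case (Suc t)
  then have "in_calF (replicator 2 F0 t)" by simp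
  then show ?case using rep_step phi_calF by simp
qed

theorem mainTheorem2:
  fixes F0 :: "real \<Rightarrow> real" and x :: real and t :: nat
  assumes "in_calF F0" and "x < 1/2"
  shows "replicator 2 F0 t x = (2 * F0 x) ^ (2 ^ t) / 2"
proof (induction t)
  case 0 then show ?case by simp
next
  case (Suc t)
  have c: "in_calF (replicator 2 F0 t)" by (rule rep_calF[OF assms(1)])
  interpret calF "replicator 2 F0 t" by (rule calF.intro) (rule c)
  have le: "replicator 2 F0 t x \<le> 1/2" by (rule F_le_half[OF assms(2)])
  have "replicator 2 F0 (Suc t) x = phi0 (replicator 2 F0 t x)" using rep_step[OF c] by simp
  also have "\<dots> = 2 * (replicator 2 F0 t x)^2" by (rule phi0_low[OF le])
  also have "\<dots> = 2 * ((2 * F0 x) ^ (2 ^ t) / 2)^2" using Suc by (simp only:)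
  also have "\<dots> = ((2 * F0 x) ^ (2 ^ t))^2 / 2" by (simp add: power2_eq_square)
  also have "\<dots> = (2 * F0 x) ^ (2 ^ Suc t) / 2" by (subst power_mult[symmetric]) (simp add: mult.commute)
  finally show ?case .
qed

end
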